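(* Let $k\ge4$, let $\sigma=\sigma_1\cdots\sigma_{k-2}\in\mathfrak S_{k-2}$ be a consecutive pattern, and let $1\text{-}\sigma\text{-}k$ denote the generalized pattern $1\text{-}(\sigma_1+1)\cdots(\sigma_{k-2}+1)\text{-}k$. Then $$\lim_{n\to\infty}\left(\frac{\alpha_n(1\text{-}\sigma\text{-}k)}{n!}\right)^{1/n}=\lim_{n\to\infty}\left(\frac{\alpha_n(\sigma)}{n!}\right)^{1/n}.$$
   Context: $\mathfrak S_n$ is the symmetric group on $\{1,\dots,n\}$, permutations in one-line notation. A generalized pattern of length $m$ is a permutation $\sigma_1\cdots\sigma_m\in\mathfrak S_m$ with, between each pair of adjacent entries, either a dash "-" or nothing. A permutation $\pi\in\mathfrak S_n$ contains it if there are indices $i_1<\dots<i_m$ with $i_{j+1}=i_j+1$ whenever there is no dash between $\sigma_j$ and $\sigma_{j+1}$, and with $\pi_{i_a}<\pi_{i_b}$ iff $\sigma_a<\sigma_b$ for all $a,b$; otherwise $\pi$ avoids it. A consecutive pattern has no dashes. $\alpha_n(\sigma)$ is the number of permutations in $\mathfrak S_n$ avoiding $\sigma$. *)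

theory Defs
  imports Complex_Main
begin

definition perms :: "nat \<Rightarrow> nat list set" where
  "perms n = {p. distinct p \<and> set p = {1..n}}"

text \<open>A generalized pattern is a pair (s, D): s is a permutation of {1..m} in one-line
  notation, and D is the set of (0-based) positions j such that there is a dash between
  the entries s!j and s!(j+1).  A consecutive pattern has D = {}.\<close>
definition contains :: "nat list \<Rightarrow> nat list \<times> nat set \<Rightarrow> bool" where
  "contains p pat = (let s = fst pat; D = snd pat; m = length s in
     \<exists>idx :: nat \<Rightarrow> nat.
        (\<forall>a<m. idx a < length p) \<and>
        (\<forall>a b. a < b \<and> b < m \<longrightarrow> idx a < idx b) \<and>
        (\<forall>j. j + 1 < m \<and> j \<notin> D \<longrightarrow> idx (j + 1) = idx j + 1) \<and>
        (\<forall>a<m. \<forall>b<m. (p ! idx a < p ! idx b) \<longleftrightarrow> (s ! a < s ! b)))"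

definition avoiders :: "nat \<Rightarrow> nat list \<times> nat set \<Rightarrow> nat" where
  "avoiders n pat = card {p \<in> perms n. \<not> contains p pat}"

definition one_sigma_k :: "nat list \<Rightarrow> nat list \<times> nat set" where
  "one_sigma_k s = (1 # map Suc s @ [length s + 2], {0, length s})"

end

theory Submission
  imports Defs "HOL-Combinatorics.Multiset_Permutations"
begin

definition cnt :: "(nat list \<Rightarrow> bool) \<Rightarrow> nat set \<Rightarrow> nat" where
  "cnt Q V = card {p. distinct p \<and> set p = V \<and> Q p}"

definition ord_inv :: "(nat list \<Rightarrow> bool) \<Rightarrow> bool" where
  "ord_inv Q = (\<forall>p f. (\<forall>x\<in>set p. \<forall>y\<in>set p. x < y \<longrightarrow> f x < f y) \<longrightarrow> Q (map f p) = Q p)"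

lemma mono_cmp:
  fixes p :: "nat list" and f :: "nat \<Rightarrow> nat"
  assumes "\<forall>x\<in>set p. \<forall>y\<in>set p. x < y \<longrightarrow> f x < f y" "i < length p" "j < length p"
  shows "(map f p ! i < map f p ! j) = (p ! i < p ! j)"
proof -
  have a: "p!i \<in> set p" "p!j \<in> set p" using assms by auto
  have "f (p!i) < f (p!j) \<longleftrightarrow> p!i < p!j"
  proof
    assume h: "f (p!i) < f (p!j)"
    show "p!i < p!j"
    proof (rule ccontr)
      assume "\<not> p!i < p!j"
      hence "p!j < p!i \<or> p!j = p!i" by (simp add: not_less le_less)
      thus False using h assms(1) a by (metis order_less_asym order_less_irrefl)
    qed
  qed (use assms(1) a in auto)
  thus ?thesis using assms by simp
qed

lemma finite_cnt_set: "finite V \<Longrightarrow> finite {p. distinct p \<and> set p = V \<and> Q p}"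
proof -
  have "{p. distinct p \<and> set p = V \<and> Q p} \<subseteq> permutations_of_set V"
    by (auto simp: permutations_of_set_def)
  thus ?thesis using finite_permutations_of_set[of V] finite_subset by blast
qed

lemma cnt_le_fact: "finite V \<Longrightarrow> cnt Q V \<le> fact (card V)"
proof -
  assume f: "finite V"
  have "cnt Q V \<le> card (permutations_of_set V)"
    unfolding cnt_def by (rule card_mono[OF finite_permutations_of_set]) (auto simp: permutations_of_set_def)
  thus ?thesis using f by simp
qed

definition rk :: "nat set \<Rightarrow> nat \<Rightarrow> nat" where
  "rk V x = card {y\<in>V. y < x} + 1"

lemma rk_mono:
  assumes "finite V" "x \<in> V" "x' \<in> V" "x < x'"
  shows "rk V x < rk V x'"
proof -
  have "{y\<in>V. y < x} \<subset> {y\<in>V. y < x'}" using assms by auto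
  hence "card {y\<in>V. y < x} < card {y\<in>V. y < x'}"
    by (rule psubset_card_mono[rotated]) (use assms in auto)
  thus ?thesis by (simp add: rk_def)
qed

lemma rk_bij:
  assumes "finite V"
  shows "bij_betw (rk V) V {1..card V}"
proof -
  have inj: "inj_on (rk V) V"
    by (rule inj_onI) (metis assms rk_mono linorder_neq_iff order_less_irrefl)
  have sub: "rk V ` V \<subseteq> {1..card V}"
  proof
    fix z assume "z \<in> rk V ` V"
    then obtain x where x: "x \<in> V" "z = rk V x" by auto
    have "{y\<in>V. y < x} \<subset> V" using x by auto
    hence "card {y\<in>V. y < x} < card V" using assms by (simp add: psubset_card_mono)
    thus "z \<in> {1..card V}" using x by (simp add: rk_def)
  qed
  have "card (rk V ` V) = card {1..card V}" using card_image[OF inj] by simp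
  hence "rk V ` V = {1..card V}" using sub by (intro card_subset_eq) auto
  thus ?thesis using inj by (simp add: bij_betw_def)
qed

lemma cnt_bij:
  assumes "ord_inv Q" "bij_betw f V W" "\<forall>x\<in>V. \<forall>y\<in>V. x < y \<longrightarrow> f x < f y"
  shows "cnt Q V = cnt Q W"
proof -
  let ?S = "{p. distinct p \<and> set p = V \<and> Q p}"
  let ?T = "{p. distinct p \<and> set p = W \<and> Q p}"
  have injf: "inj_on f V" and im: "f ` V = W" using assms(2) by (auto simp: bij_betw_def)
  have inj: "inj_on (map f) ?S"
    by (rule inj_onI) (use injf in \<open>auto intro: map_inj_on\<close>)
  have "map f ` ?S = ?T"
  proof
    show "map f ` ?S \<subseteq> ?T"
    proof
      fix q assume "q \<in> map f ` ?S"
      then obtain p where p: "p \<in> ?S" "q = map f p" by auto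
      have "Q (map f p) = Q p" using assms(1,3) p unfolding ord_inv_def by blast
      thus "q \<in> ?T" using p injf im by (auto simp: distinct_map)
    qed
  next
    show "?T \<subseteq> map f ` ?S"
    proof
      fix q assume q: "q \<in> ?T"
      let ?g = "inv_into V f"
      have bg: "bij_betw ?g W V" using assms(2) by (rule bij_betw_inv_into)
      define p where "p = map ?g q"
      have mq: "map f p = q" unfolding p_def map_map
        by (rule map_idI) (use q im in \<open>auto intro: f_inv_into_f\<close>)
      have dp: "distinct p" unfolding p_def using q bg
        by (auto simp: distinct_map bij_betw_def intro: inj_on_subset)
      have sp: "set p = V" unfolding p_def using q bg by (auto simp: bij_betw_def)
      have "Q (map f p) = Q p" using assms(1,3) sp unfolding ord_inv_def by blast
      hence "Q p" using q mq by simp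
      hence "p \<in> ?S" using dp sp by simp
      thus "q \<in> map f ` ?S" using mq by (intro rev_image_eqI) auto
    qed
  qed
  thus ?thesis unfolding cnt_def using card_image[OF inj] by simp
qed

lemma cnt_norm:
  assumes "ord_inv Q" "finite V"
  shows "cnt Q V = cnt Q {1..card V}"
  using cnt_bij[OF assms(1) rk_bij[OF assms(2)]] rk_mono[OF assms(2)] by blast

lemma sum_pow_card:
  fixes g :: "nat \<Rightarrow> nat"
  assumes "finite A"
  shows "(\<Sum>V\<in>Pow A. g (card V)) = (\<Sum>j\<le>card A. (card A choose j) * g j)"
proof -
  have "(\<Sum>V\<in>Pow A. g (card V)) = (\<Sum>j\<le>card A. \<Sum>V\<in>{V. V \<in> Pow A \<and> card V = j}. g (card V))"
    by (rule sum.group[symmetric]) (use assms in \<open>auto intro: card_mono\<close>)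
  also have "\<dots> = (\<Sum>j\<le>card A. (card A choose j) * g j)"
  proof (rule sum.cong[OF refl])
    fix j
    have "(\<Sum>V\<in>{V. V \<in> Pow A \<and> card V = j}. g (card V)) = (\<Sum>V\<in>{V. V \<subseteq> A \<and> card V = j}. g j)"
      by (rule sum.cong) auto
    also have "\<dots> = (card A choose j) * g j" using n_subsets[OF assms, of j] by simp
    finally show "(\<Sum>V\<in>{V. V \<in> Pow A \<and> card V = j}. g (card V)) = (card A choose j) * g j" .
  qed
  finally show ?thesis .
qed

lemma split_count:
  fixes W :: "nat set" and mid :: "nat list"
  assumes fin: "finite W"
    and dec: "\<And>p. distinct p \<Longrightarrow> set p = W \<Longrightarrow> Q p \<Longrightarrow> \<exists>p1 p2. p = p1 @ mid @ p2 \<and> Q1 p1 \<and> Q2 p2"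
    and n1: "\<And>V. finite V \<Longrightarrow> cnt Q1 V = N1 (card V)"
    and n2: "\<And>V. finite V \<Longrightarrow> cnt Q2 V = N2 (card V)"
  shows "cnt Q W \<le> (\<Sum>j\<le>card (W - set mid). (card (W - set mid) choose j) * N1 j * N2 (card (W - set mid) - j))"
proof -
  define W' where "W' = W - set mid"
  have fW': "finite W'" using fin by (simp add: W'_def)
  let ?S = "{p. distinct p \<and> set p = W \<and> Q p}"
  let ?L1 = "\<lambda>V. {p. distinct p \<and> set p = V \<and> Q1 p}"
  let ?L2 = "\<lambda>V. {p. distinct p \<and> set p = V \<and> Q2 p}"
  define F where "F p = (SOME pp. p = fst pp @ mid @ snd pp \<and> Q1 (fst pp) \<and> Q2 (snd pp))" for p
  have Fp: "p = fst (F p) @ mid @ snd (F p) \<and> Q1 (fst (F p)) \<and> Q2 (snd (F p))" if h: "p \<in> ?S" for p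
  proof -
    obtain p1 p2 where "p = p1 @ mid @ p2 \<and> Q1 p1 \<and> Q2 p2" using dec[of p] h by auto
    hence "\<exists>pp. p = fst pp @ mid @ snd pp \<and> Q1 (fst pp) \<and> Q2 (snd pp)" by (intro exI[of _ "(p1,p2)"]) auto
    thus ?thesis unfolding F_def by (rule someI_ex)
  qed
  have inj: "inj_on F ?S"
  proof (rule inj_onI)
    fix p q assume "p \<in> ?S" "q \<in> ?S" "F p = F q"
    thus "p = q" using Fp by metis
  qed
  have sub: "F ` ?S \<subseteq> (\<Union>V\<in>Pow W'. ?L1 V \<times> ?L2 (W' - V))"
  proof
    fix z assume "z \<in> F ` ?S"
    then obtain p where p: "p \<in> ?S" "z = F p" by auto
    obtain p1 p2 where z: "z = (p1, p2)" by (cases z)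
    have e: "p = p1 @ mid @ p2" "Q1 p1" "Q2 p2" using Fp[OF p(1)] p(2) z by (metis fst_conv snd_conv)+
    have d: "distinct p" "set p = W" using p by auto
    have "set p1 \<subseteq> W'" "set p2 = W' - set p1" using d e(1) by (auto simp: W'_def)
    moreover have "distinct p1" "distinct p2" using d e(1) by auto
    ultimately show "z \<in> (\<Union>V\<in>Pow W'. ?L1 V \<times> ?L2 (W' - V))" using e z by blast
  qed
  have fU: "finite (\<Union>V\<in>Pow W'. ?L1 V \<times> ?L2 (W' - V))"
    using fW' by (auto intro!: finite_cartesian_product finite_cnt_set intro: finite_subset)
  have "cnt Q W = card (F ` ?S)" unfolding cnt_def using card_image[OF inj] by simp
  also have "\<dots> \<le> card (\<Union>V\<in>Pow W'. ?L1 V \<times> ?L2 (W' - V))" by (rule card_mono[OF fU sub])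
  also have "\<dots> \<le> (\<Sum>V\<in>Pow W'. card (?L1 V \<times> ?L2 (W' - V)))"
    by (rule card_UN_le) (use fW' in simp)
  also have "\<dots> = (\<Sum>V\<in>Pow W'. N1 (card V) * N2 (card W' - card V))"
  proof (rule sum.cong[OF refl])
    fix V assume V: "V \<in> Pow W'"
    have fV: "finite V" using V fW' finite_subset by auto
    have "card (?L1 V \<times> ?L2 (W' - V)) = cnt Q1 V * cnt Q2 (W' - V)"
      unfolding cnt_def card_cartesian_product ..
    also have "\<dots> = N1 (card V) * N2 (card W' - card V)"
      using n1[OF fV] n2[of "W' - V"] fW' V by (simp add: card_Diff_subset fV)
    finally show "card (?L1 V \<times> ?L2 (W' - V)) = N1 (card V) * N2 (card W' - card V)" .
  qed
  also have "\<dots> = (\<Sum>j\<le>card W'. (card W' choose j) * (N1 j * N2 (card W' - j)))"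
    by (rule sum_pow_card[OF fW'])
  finally show ?thesis unfolding W'_def by (simp add: mult.assoc)
qed

definition occ :: "nat list \<Rightarrow> nat list \<Rightarrow> nat \<Rightarrow> bool" where
  "occ s p i \<longleftrightarrow> i + length s \<le> length p \<and>
     (\<forall>a<length s. \<forall>b<length s. (p!(i+a) < p!(i+b)) = (s!a < s!b))"

definition PA :: "nat list \<Rightarrow> nat list \<Rightarrow> bool" where
  "PA s p = (\<forall>i. \<not> occ s p i)"

definition PU :: "nat list \<Rightarrow> nat list \<Rightarrow> bool" where
  "PU s p = (\<forall>i j. occ s p i \<and> i + length s \<le> j \<and> j < length p \<longrightarrow>
               \<not> (\<forall>a<length s. p!(i+a) < p!j))"

definition PT :: "nat list \<Rightarrow> nat list \<Rightarrow> bool" where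
  "PT s p = (\<forall>h i j. occ s p i \<and> h < i \<and> i + length s \<le> j \<and> j < length p \<longrightarrow>
               \<not> ((\<forall>a<length s. p!h < p!(i+a)) \<and> (\<forall>a<length s. p!(i+a) < p!j)))"

lemma occ_map:
  assumes "\<forall>x\<in>set p. \<forall>y\<in>set p. x < y \<longrightarrow> f x < f y"
  shows "occ s (map f p) i = occ s p i"
  unfolding occ_def using mono_cmp[OF assms] by (auto simp del: nth_map)

lemma ord_inv_PA: "ord_inv (PA s)"
  unfolding ord_inv_def PA_def using occ_map by blast

lemma ord_inv_PU: "ord_inv (PU s)"
  unfolding ord_inv_def
proof (intro allI impI)
  fix p :: "nat list" and f :: "nat \<Rightarrow> nat"
  assume m: "\<forall>x\<in>set p. \<forall>y\<in>set p. x < y \<longrightarrow> f x < f y"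
  have h: "(\<forall>a<length s. map f p!(i+a) < map f p!j) = (\<forall>a<length s. p!(i+a) < p!j)"
    if "occ s p i" "j < length p" for i j
    using mono_cmp[OF m] that unfolding occ_def by (auto simp del: nth_map)
  show "PU s (map f p) = PU s p" unfolding PU_def length_map occ_map[OF m]
    using h by (metis (no_types, lifting))
qed

lemma ord_inv_PT: "ord_inv (PT s)"
  unfolding ord_inv_def
proof (intro allI impI)
  fix p :: "nat list" and f :: "nat \<Rightarrow> nat"
  assume m: "\<forall>x\<in>set p. \<forall>y\<in>set p. x < y \<longrightarrow> f x < f y"
  have h1: "(\<forall>a<length s. map f p!(i+a) < map f p!j) = (\<forall>a<length s. p!(i+a) < p!j)"
    if "occ s p i" "j < length p" for i j
    using mono_cmp[OF m] that unfolding occ_def by (auto simp del: nth_map)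
  have h2: "(\<forall>a<length s. map f p!h < map f p!(i+a)) = (\<forall>a<length s. p!h < p!(i+a))"
    if "occ s p i" "h < i" for i h
    using mono_cmp[OF m] that unfolding occ_def by (auto simp del: nth_map)
  show "PT s (map f p) = PT s p" unfolding PT_def length_map occ_map[OF m]
    using h1 h2 by (metis (no_types, lifting))
qed

lemma ord_inv_len: "ord_inv Q \<Longrightarrow> ord_inv (\<lambda>p. Q p \<and> length p = n)"
  unfolding ord_inv_def by auto

lemma occ_left: "occ s p i \<Longrightarrow> occ s (p @ q) i"
  unfolding occ_def by (auto simp: nth_append)

lemma occ_right: "occ s p i \<Longrightarrow> occ s (q @ p) (length q + i)"
  unfolding occ_def by (auto simp: nth_append add.assoc)

lemma PA_take: "PA s p \<Longrightarrow> PA s (take n p)"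
  unfolding PA_def by (metis append_take_drop_id occ_left)

lemma PA_drop: "PA s p \<Longrightarrow> PA s (drop n p)"
  unfolding PA_def by (metis append_take_drop_id occ_right)

lemma cnt_len:
  assumes "finite V"
  shows "cnt (\<lambda>p. Q p \<and> length p = n) V = (if card V = n then cnt Q V else 0)"
proof -
  have "{p. distinct p \<and> set p = V \<and> Q p \<and> length p = n} =
        (if card V = n then {p. distinct p \<and> set p = V \<and> Q p} else {})"
    by (auto dest: distinct_card)
  thus ?thesis unfolding cnt_def by simp
qed

lemma submult_nat:
  "cnt (PA s) {1..n+l} \<le> ((n+l) choose n) * cnt (PA s) {1..n} * cnt (PA s) {1..l}"
proof -
  let ?a = "\<lambda>j. cnt (PA s) {1..j}"
  have "cnt (PA s) {1..n+l} \<le> (\<Sum>j\<le>card ({1..n+l} - set []). (card ({1..n+l} - set []) choose j)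
      * (if j = n then ?a n else 0) * ?a (card ({1..n+l} - set []) - j))"
  proof (rule split_count)
    fix p assume p: "distinct p" "set p = {1..n+l}" "PA s p"
    have "length p = n + l" using distinct_card[OF p(1)] p(2) by simp
    thus "\<exists>p1 p2. p = p1 @ [] @ p2 \<and> (PA s p1 \<and> length p1 = n) \<and> PA s p2"
      using p by (intro exI[of _ "take n p"] exI[of _ "drop n p"]) (auto simp: PA_take PA_drop)
  next
    fix V :: "nat set" assume "finite V"
    thus "cnt (\<lambda>p. PA s p \<and> length p = n) V = (if card V = n then ?a n else 0)"
      using cnt_len[of V "PA s" n] cnt_norm[OF ord_inv_PA, of V s] by auto
  next
    fix V :: "nat set" assume "finite V"
    thus "cnt (PA s) V = ?a (card V)" using cnt_norm[OF ord_inv_PA, of V s] by blast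
  qed simp
  also have "\<dots> = (\<Sum>j\<le>n+l. if j = n then ((n+l) choose n) * ?a n * ?a l else 0)"
    by (rule sum.cong) auto
  also have "\<dots> = ((n+l) choose n) * ?a n * ?a l" by simp
  finally show ?thesis .
qed

lemma U_rec_nat:
  assumes "n \<ge> 1"
  shows "cnt (PU s) {1..n} \<le> (\<Sum>j\<le>n-1. ((n-1) choose j) * cnt (PA s) {1..j} * cnt (PU s) {1..n-1-j})"
proof -
  have c: "card ({1..n} - set [n]) = n - 1" using assms by simp
  have "cnt (PU s) {1..n} \<le> (\<Sum>j\<le>card ({1..n} - set [n]). (card ({1..n} - set [n]) choose j)
      * cnt (PA s) {1..j} * cnt (PU s) {1..card ({1..n} - set [n]) - j})"
  proof (rule split_count)
    fix p assume p: "distinct p" "set p = {1..n}" "PU s p"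
    have "n \<in> set p" using p assms by auto
    then obtain ys zs where e: "p = ys @ n # zs" by (meson split_list)
    have A: "PA s ys" unfolding PA_def
    proof (intro allI notI)
      fix i assume o: "occ s ys i"
      have o': "occ s p i" using occ_left[OF o, of "n # zs"] e by simp
      have "p!(i+a) < p!(length ys)" if "a < length s" for a
      proof -
        have li: "i + a < length ys" using o that unfolding occ_def by auto
        have pi: "p!(i+a) = ys!(i+a)" using li e by (simp add: nth_append)
        have m: "ys!(i+a) \<in> set ys" using li by simp
        have "n \<notin> set ys" using p(1) e by simp
        hence ne: "ys!(i+a) \<noteq> n" using m by metis
        have "set ys \<subseteq> {1..n}" using p(2) e by auto
        hence "ys!(i+a) \<le> n" using m by auto
        moreover have "p!(length ys) = n" using e by (simp add: nth_append)
        ultimately show ?thesis using ne pi by simp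
      qed
      moreover have "i + length s \<le> length ys" using o unfolding occ_def by simp
      moreover have "length ys < length p" using e by simp
      ultimately show False using p(3) o' unfolding PU_def by blast
    qed
    have U: "PU s zs" unfolding PU_def
    proof (intro allI impI notI)
      fix i j assume h: "occ s zs i \<and> i + length s \<le> j \<and> j < length zs" and c: "\<forall>a<length s. zs!(i+a) < zs!j"
      have pe: "p = (ys @ [n]) @ zs" using e by simp
      have o': "occ s p (length (ys @ [n]) + i)" using occ_right[of s zs i "ys @ [n]"] h pe by simp
      have "\<forall>a<length s. p!(length (ys @ [n]) + i + a) < p!(length (ys @ [n]) + j)"
        using c pe by (simp add: nth_append add.assoc)
      moreover have "length (ys @ [n]) + i + length s \<le> length (ys @ [n]) + j" "length (ys @ [n]) + j < length p"
        using h pe by auto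
      ultimately show False using p(3) o' unfolding PU_def by blast
    qed
    show "\<exists>p1 p2. p = p1 @ [n] @ p2 \<and> PA s p1 \<and> PU s p2" using A U e by auto
  next
    fix V :: "nat set" assume "finite V"
    thus "cnt (PA s) V = cnt (PA s) {1..card V}" using cnt_norm[OF ord_inv_PA, of V s] by blast
  next
    fix V :: "nat set" assume "finite V"
    thus "cnt (PU s) V = cnt (PU s) {1..card V}" using cnt_norm[OF ord_inv_PU, of V s] by blast
  qed simp
  thus ?thesis unfolding c .
qed

lemma T_rec_nat:
  assumes "n \<ge> 1"
  shows "cnt (PT s) {1..n} \<le> (\<Sum>j\<le>n-1. ((n-1) choose j) * cnt (PT s) {1..j} * cnt (PU s) {1..n-1-j})"
proof -
  have c: "card ({1..n} - set [1]) = n - 1" using assms by simp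
  have "cnt (PT s) {1..n} \<le> (\<Sum>j\<le>card ({1..n} - set [1]). (card ({1..n} - set [1]) choose j)
      * cnt (PT s) {1..j} * cnt (PU s) {1..card ({1..n} - set [1]) - j})"
  proof (rule split_count)
    fix p assume p: "distinct p" "set p = {1..n}" "PT s p"
    have "1 \<in> set p" using p assms by auto
    then obtain ys zs where e: "p = ys @ 1 # zs" by (meson split_list)
    have T: "PT s ys" unfolding PT_def
    proof (intro allI impI notI)
      fix h i j assume H: "occ s ys i \<and> h < i \<and> i + length s \<le> j \<and> j < length ys"
        and c: "(\<forall>a<length s. ys!h < ys!(i+a)) \<and> (\<forall>a<length s. ys!(i+a) < ys!j)"
      have o': "occ s p i" using occ_left[of s ys i "1 # zs"] H e by simp
      have pn: "p!x = ys!x" if "x < length ys" for x using e that by (simp add: nth_append)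
      have "p!h < p!(i+a)" "p!(i+a) < p!j" if "a < length s" for a
      proof -
        have "h < length ys" "i + a < length ys" using H that by auto
        thus "p!h < p!(i+a)" "p!(i+a) < p!j" using pn c that H by auto
      qed
      hence "(\<forall>a<length s. p!h < p!(i+a)) \<and> (\<forall>a<length s. p!(i+a) < p!j)" by blast
      moreover have "j < length p" using H e by simp
      ultimately show False using p(3) o' H unfolding PT_def by blast
    qed
    have U: "PU s zs" unfolding PU_def
    proof (intro allI impI notI)
      fix i j assume h: "occ s zs i \<and> i + length s \<le> j \<and> j < length zs" and c: "\<forall>a<length s. zs!(i+a) < zs!j"
      have pe: "p = (ys @ [1]) @ zs" using e by simp
      have o': "occ s p (length (ys @ [1]) + i)" using occ_right[of s zs i "ys @ [1]"] h pe by simp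
      have c1: "\<forall>a<length s. p!(length (ys @ [1]) + i + a) < p!(length (ys @ [1]) + j)"
        using c pe by (simp add: nth_append add.assoc)
      have c2: "p!(length ys) < p!(length (ys @ [1]) + i + a)" if "a < length s" for a
      proof -
        have li: "i + a < length zs" using h that unfolding occ_def by auto
        have pz: "p!(length (ys @ [1]) + i + a) = zs!(i+a)" using pe by (simp add: nth_append add.assoc)
        have m: "zs!(i+a) \<in> set zs" using li by simp
        have "1 \<notin> set zs" using p(1) e by simp
        hence ne: "zs!(i+a) \<noteq> 1" using m by metis
        have "set zs \<subseteq> {1..n}" using p(2) e by auto
        hence "zs!(i+a) \<ge> 1" using m by auto
        moreover have "p!(length ys) = 1" using e by (simp add: nth_append)
        ultimately show ?thesis using ne pz by simp
      qed
      have "length (ys @ [1]) + i + length s \<le> length (ys @ [1]) + j" "length (ys @ [1]) + j < length p"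
        "length ys < length (ys @ [1]) + i"
        using h pe by auto
      thus False using p(3) o' c1 c2 unfolding PT_def by blast
    qed
    show "\<exists>p1 p2. p = p1 @ [1] @ p2 \<and> PT s p1 \<and> PU s p2" using T U e by auto
  next
    fix V :: "nat set" assume "finite V"
    thus "cnt (PT s) V = cnt (PT s) {1..card V}" using cnt_norm[OF ord_inv_PT, of V s] by blast
  next
    fix V :: "nat set" assume "finite V"
    thus "cnt (PU s) V = cnt (PU s) {1..card V}" using cnt_norm[OF ord_inv_PU, of V s] by blast
  qed simp
  thus ?thesis unfolding c .
qed

lemma A_le_T: "cnt (PA s) {1..n} \<le> cnt (PT s) {1..n}"
  unfolding cnt_def by (rule card_mono[OF finite_cnt_set]) (auto simp: PA_def PT_def)

lemma rec_bound:
  fixes x y :: "nat \<Rightarrow> real" and K c :: real and M :: nat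
  assumes x0: "\<And>j. 0 \<le> x j" and x1: "x 0 \<le> 1" and c: "c > 0"
    and yb: "\<And>j. y j \<le> K * c^j" and KM: "K / c \<le> M"
    and rec: "\<And>n. n \<ge> 1 \<Longrightarrow> n * x n \<le> (\<Sum>j<n. x j * y (n-1-j))"
  shows "x n \<le> (n+1)^M * c^n"
proof -
  define w where "w j = x j / c^j" for j
  define S where "S n = (\<Sum>j<n. w j)" for n
  have w0: "0 \<le> w j" for j using x0 c by (simp add: w_def)
  have S0: "0 \<le> S n" for n unfolding S_def by (rule sum_nonneg) (use w0 in auto)
  have c1: "n * w n \<le> M * S n" if n: "n \<ge> 1" for n
  proof -
    have "n * x n \<le> (\<Sum>j<n. x j * (K * c^(n-1-j)))"
      using rec[OF n] by (rule order_trans) (intro sum_mono mult_left_mono yb x0)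
    also have "\<dots> = (\<Sum>j<n. w j * (K * c^(n-1)))"
    proof (rule sum.cong[OF refl])
      fix j assume "j \<in> {..<n}"
      hence "c^j * c^(n-1-j) = c^(n-1)" by (simp flip: power_add)
      thus "x j * (K * c^(n-1-j)) = w j * (K * c^(n-1))" using c unfolding w_def
        by (simp add: field_simps)
    qed
    also have "\<dots> = K * c^(n-1) * S n" by (simp add: S_def sum_distrib_right mult.commute)
    finally have A: "n * x n \<le> K * c^(n-1) * S n" .
    have cn: "c^n = c * c^(n-1)" using n by (cases n) auto
    have "n * w n = n * x n / c^n" by (simp add: w_def)
    also have "\<dots> \<le> K * c^(n-1) * S n / c^n" using A c by (simp add: divide_right_mono)
    also have "\<dots> = (K / c) * S n" using c cn by (simp add: field_simps)
    also have "\<dots> \<le> M * S n" using KM S0 by (rule mult_right_mono)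
    finally show ?thesis .
  qed
  have c2: "S n \<le> real n ^ M" if "n \<ge> 1" for n
    using that
  proof (induction n rule: dec_induct)
    case base
    thus ?case using x1 by (simp add: S_def w_def)
  next
    case (step n)
    have n: "real n \<ge> 1" using step by simp
    have "S (Suc n) = S n + w n" by (simp add: S_def)
    also have "\<dots> \<le> S n + M * S n / n" using c1[OF step(1)] n by (simp add: field_simps)
    also have "\<dots> = S n * (1 + M / n)" by (simp add: field_simps)
    also have "\<dots> \<le> real n ^ M * (1 + M / n)" using step(3) n by (intro mult_right_mono) auto
    also have "\<dots> \<le> real n ^ M * (1 + 1 / n) ^ M"
    proof -
      have "(-1::real) \<le> 1 / real n" using n by (smt (verit) divide_nonneg_nonneg)
      from Bernoulli_inequality[OF this, of M]
      have "1 + M / real n \<le> (1 + 1 / n) ^ M" by simp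
      thus ?thesis using n by (intro mult_left_mono) auto
    qed
    also have "\<dots> = real (Suc n) ^ M" using n by (simp add: power_mult_distrib[symmetric] field_simps)
    finally show ?case .
  qed
  have "w n \<le> S (Suc n)" using S0[of n] by (simp add: S_def)
  also have "\<dots> \<le> real (Suc n) ^ M" by (rule c2) simp
  finally have "w n \<le> real (n+1) ^ M" by simp
  hence "w n * c^n \<le> real (n+1) ^ M * c^n" using c by (intro mult_right_mono) auto
  thus ?thesis using c by (simp add: w_def add.commute)
qed

lemma root_poly_lim: "(\<lambda>n. root n (real (n+1) ^ M)) \<longlonglongrightarrow> 1"
proof -
  have r: "(\<lambda>n. root n (real (n+1))) \<longlonglongrightarrow> 1"
  proof (rule tendsto_sandwich[of "\<lambda>n. 1" _ _ "\<lambda>n. root n 2 * root n (real n)"])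
    show "\<forall>\<^sub>F n in sequentially. 1 \<le> root n (real (n+1))"
      unfolding eventually_sequentially
      by (rule exI[of _ 1]) (metis real_root_le_iff real_root_one le_add2 of_nat_1 of_nat_le_iff order_le_less_trans zero_less_one le_trans not_le)
    show "\<forall>\<^sub>F n in sequentially. root n (real (n+1)) \<le> root n 2 * root n (real n)"
      unfolding eventually_sequentially
    proof (intro exI[of _ 1] allI impI)
      fix n :: nat assume n: "1 \<le> n"
      have "root n (real (n+1)) \<le> root n (2 * real n)" using n by simp
      thus "root n (real (n+1)) \<le> root n 2 * root n (real n)" by (simp add: real_root_mult)
    qed
    show "(\<lambda>n. 1::real) \<longlonglongrightarrow> 1" by simp
    show "(\<lambda>n. root n 2 * root n (real n)) \<longlonglongrightarrow> 1"
      using tendsto_mult[OF LIMSEQ_root_const[of 2] LIMSEQ_root] by simp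
  qed
  have "(\<lambda>n. root n (real (n+1)) ^ M) \<longlonglongrightarrow> 1 ^ M" by (rule tendsto_power[OF r])
  moreover have "\<forall>\<^sub>F n in sequentially. root n (real (n+1)) ^ M = root n (real (n+1) ^ M)"
    unfolding eventually_sequentially by (intro exI[of _ 1] allI impI) (simp add: real_root_power)
  ultimately show ?thesis using Lim_transform_eventually by fastforce
qed

lemma ev_root_lt:
  fixes x :: "nat \<Rightarrow> real"
  assumes c: "c > 0" "c < d" and x0: "\<And>n. 0 \<le> x n" and xb: "\<And>n. x n \<le> real (n+1) ^ M * c^n"
  shows "\<forall>\<^sub>F n in sequentially. root n (x n) < d"
proof -
  have "(\<lambda>n. root n (real (n+1) ^ M) * c) \<longlonglongrightarrow> 1 * c"
    by (rule tendsto_mult[OF root_poly_lim tendsto_const])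
  hence e: "\<forall>\<^sub>F n in sequentially. root n (real (n+1) ^ M) * c < d"
    using c by (intro order_tendstoD(2)) auto
  have e1: "\<forall>\<^sub>F n in sequentially. n \<ge> 1" by (simp add: eventually_ge_at_top)
  show ?thesis using e e1
  proof eventually_elim
    case (elim n)
    have "root n (x n) \<le> root n (real (n+1) ^ M * c^n)" using elim xb by simp
    also have "\<dots> = root n (real (n+1) ^ M) * c"
      using elim c by (simp add: real_root_mult real_root_power_cancel)
    finally show ?case using elim by simp
  qed
qed

lemma ev_le_pow:
  fixes x :: "nat \<Rightarrow> real"
  assumes "\<forall>\<^sub>F n in sequentially. root n (x n) < d" "\<And>n. 0 \<le> x n"
  shows "\<forall>\<^sub>F n in sequentially. x n \<le> d^n"
  using assms(1) eventually_ge_at_top[of 1]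
proof eventually_elim
  case (elim n)
  have "x n = root n (x n) ^ n" using elim assms(2)[of n] by simp
  also have "\<dots> \<le> d ^ n" using elim assms(2)[of n]
    by (intro power_mono) (auto simp: real_root_ge_zero)
  finally show ?case .
qed

lemma geom_bound:
  fixes f :: "nat \<Rightarrow> real"
  assumes f0: "\<And>n. 0 \<le> f n" and c: "c > 0" and ev: "\<forall>\<^sub>F n in sequentially. f n \<le> c^n"
  shows "\<exists>K. \<forall>n. f n \<le> K * c^n"
proof -
  obtain N where N: "\<And>n. n \<ge> N \<Longrightarrow> f n \<le> c^n" using ev unfolding eventually_sequentially by blast
  define K where "K = 1 + (\<Sum>j<N. f j / c^j)"
  have s0: "0 \<le> (\<Sum>j<N. f j / c^j)" using f0 c by (intro sum_nonneg) auto
  have "f n \<le> K * c^n" for n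
  proof (cases "n < N")
    case True
    have "f n / c^n \<le> (\<Sum>j<N. f j / c^j)"
      using True f0 c by (intro member_le_sum) auto
    hence "f n / c^n \<le> K" unfolding K_def by simp
    thus ?thesis using c by (simp add: divide_le_eq)
  next
    case False
    hence "f n \<le> c^n" using N by simp
    also have "\<dots> \<le> K * c^n" using s0 c unfolding K_def by (simp add: field_simps)
    finally show ?thesis .
  qed
  thus ?thesis by blast
qed

lemma conv_lemma:
  fixes x :: "nat \<Rightarrow> real"
  assumes "\<And>n. n \<ge> 1 \<Longrightarrow> L \<le> root n (x n)"
    and "\<And>d. d > L \<Longrightarrow> \<forall>\<^sub>F n in sequentially. root n (x n) < d"
  shows "(\<lambda>n. root n (x n)) \<longlonglongrightarrow> L"
proof (rule order_tendstoI)
  fix y assume "y < L"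
  thus "\<forall>\<^sub>F n in sequentially. y < root n (x n)"
    using assms(1) unfolding eventually_sequentially by (metis order_less_le_trans)
next
  fix y assume "L < y"
  thus "\<forall>\<^sub>F n in sequentially. root n (x n) < y" using assms(2) by blast
qed

lemma submult_pow:
  fixes a :: "nat \<Rightarrow> real"
  assumes a0: "\<And>n. 0 \<le> a n" and a1: "\<And>n. a n \<le> 1" and sm: "\<And>m n. a (m+n) \<le> a m * a n"
  shows "a (q*m + r) \<le> a m ^ q"
proof (induction q)
  case 0 thus ?case using a1 by simp
next
  case (Suc q)
  have "a (Suc q * m + r) = a (m + (q*m + r))" by (simp add: add.assoc)
  also have "\<dots> \<le> a m * a (q*m + r)" by (rule sm)
  also have "\<dots> \<le> a m * a m ^ q" using Suc a0 by (intro mult_left_mono) auto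
  finally show ?case by simp
qed

lemma fekete:
  fixes a :: "nat \<Rightarrow> real"
  assumes a0: "\<And>n. 0 \<le> a n" and a1: "\<And>n. a n \<le> 1" and sm: "\<And>m n. a (m+n) \<le> a m * a n"
  defines "L \<equiv> Inf {root n (a n) |n. n \<ge> 1}"
  shows "(\<lambda>n. root n (a n)) \<longlonglongrightarrow> L" "L \<ge> 0" "\<And>n. n \<ge> 1 \<Longrightarrow> L \<le> root n (a n)"
proof -
  let ?X = "{root n (a n) |n. n \<ge> 1}"
  have ne: "?X \<noteq> {}" by auto
  have bb: "bdd_below ?X" by (rule bdd_belowI[of _ 0]) (auto simp: real_root_ge_zero a0)
  show L0: "L \<ge> 0" unfolding L_def by (rule cInf_greatest[OF ne]) (auto simp: real_root_ge_zero a0)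
  show low: "\<And>n. n \<ge> 1 \<Longrightarrow> L \<le> root n (a n)" unfolding L_def
    by (rule cInf_lower[OF _ bb]) auto
  show "(\<lambda>n. root n (a n)) \<longlonglongrightarrow> L"
  proof (rule conv_lemma[OF low])
    fix d assume d: "d > L"
    show "\<forall>\<^sub>F n in sequentially. root n (a n) < d"
    proof (cases "d > 1")
      case True
      show ?thesis using eventually_ge_at_top[of 1]
      proof eventually_elim
        case (elim n)
        have "root n (a n) \<le> 1" using a1[of n] elim real_root_le_iff[of n "a n" 1] by simp
        thus ?case using True by simp
      qed
    next
      case False
      have "L < d" using d .
      hence "\<exists>x\<in>?X. x < d" using cInf_less_iff[OF ne bb] unfolding L_def by blast
      then obtain m where m: "m \<ge> 1" "root m (a m) < d" by auto
      define \<theta> where "\<theta> = root m (a m)"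
      define t where "t = (\<theta> + d) / 2"
      have th0: "0 \<le> \<theta>" unfolding \<theta>_def by (simp add: real_root_ge_zero a0)
      have thd: "\<theta> < d" using m unfolding \<theta>_def by simp
      have t: "\<theta> < t" "t < d" "0 < t" "t \<le> 1" using thd th0 False unfolding t_def by auto
      have am: "a m \<le> t ^ m"
      proof -
        have "a m = \<theta> ^ m" unfolding \<theta>_def using m a0 by simp
        also have "\<dots> \<le> t ^ m" using th0 t by (intro power_mono) auto
        finally show ?thesis .
      qed
      have bnd: "a n \<le> t ^ (n - m)" for n
      proof -
        have "a n = a ((n div m) * m + n mod m)" by simp
        also have "\<dots> \<le> a m ^ (n div m)" by (rule submult_pow[OF a0 a1 sm])
        also have "\<dots> \<le> (t ^ m) ^ (n div m)" using am a0 by (intro power_mono) auto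
        also have "\<dots> = t ^ (m * (n div m))" by (simp add: power_mult)
        also have "\<dots> \<le> t ^ (n - m)"
        proof (rule power_decreasing)
          have "n = m * (n div m) + n mod m" by simp
          moreover have "n mod m < m" using m by simp
          ultimately show "n - m \<le> m * (n div m)" by linarith
        qed (use t in auto)
        finally show ?thesis .
      qed
      have "(\<lambda>n. (t / d) ^ n) \<longlonglongrightarrow> 0" using t by (intro LIMSEQ_power_zero) auto
      hence ev: "\<forall>\<^sub>F n in sequentially. (t / d) ^ n < t ^ m"
        using t by (intro order_tendstoD(2)) auto
      show ?thesis using ev eventually_ge_at_top[of "m"] eventually_ge_at_top[of 1]
      proof eventually_elim
        case (elim n)
        have d0: "d > 0" using t by simp
        have "t ^ (n - m) * t ^ m = t ^ n" using elim by (simp flip: power_add)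
        also have "t ^ n = (t/d)^n * d^n" using d0 by (simp add: power_divide)
        also have "\<dots> < t ^ m * d ^ n" using elim d0 by (intro mult_strict_right_mono) auto
        finally have "t ^ (n - m) < d ^ n" using t by (simp add: mult.commute)
        hence "a n < d ^ n" using bnd[of n] by simp
        hence "root n (a n) < root n (d ^ n)" using elim by simp
        thus ?case using elim d0 by (simp add: real_root_power_cancel)
      qed
    qed
  qed
qed

lemma idx_consec:
  fixes idx :: "nat \<Rightarrow> nat"
  assumes "\<And>j. j + 1 < m \<Longrightarrow> idx (j + 1) = idx j + 1"
  shows "a < m \<Longrightarrow> idx a = idx 0 + a"
proof (induction a)
  case (Suc a) thus ?case using assms[of a] by simp
qed simp

lemma contains_A:
  assumes "length s \<ge> 1"
  shows "contains p (s, {}) \<longleftrightarrow> (\<exists>i. occ s p i)"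
proof
  assume "contains p (s, {})"
  then obtain idx where i1: "\<forall>a<length s. idx a < length p"
    and i3: "\<forall>j. j + 1 < length s \<longrightarrow> idx (j + 1) = idx j + 1"
    and i4: "\<forall>a<length s. \<forall>b<length s. (p ! idx a < p ! idx b) = (s ! a < s ! b)"
    unfolding contains_def Let_def by auto
  have e: "idx a = idx 0 + a" if "a < length s" for a
    using idx_consec[of "length s" idx a] i3 that by blast
  have "idx (length s - 1) < length p" using i1 assms by auto
  hence "idx 0 + (length s - 1) < length p" using e[of "length s - 1"] assms by simp
  hence "occ s p (idx 0)" unfolding occ_def using i4 e assms by auto
  thus "\<exists>i. occ s p i" by blast
next
  assume "\<exists>i. occ s p i"
  then obtain i where o: "occ s p i" by blast
  show "contains p (s, {})" unfolding contains_def Let_def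
    by (rule exI[of _ "\<lambda>a. i + a"]) (use o in \<open>auto simp: occ_def\<close>)
qed

lemma avoiders_A:
  assumes "length s \<ge> 1"
  shows "avoiders n (s, {}) = cnt (PA s) {1..n}"
proof -
  have "{p \<in> perms n. \<not> contains p (s, {})} = {p. distinct p \<and> set p = {1..n} \<and> PA s p}"
    using contains_A[OF assms] by (auto simp: perms_def PA_def)
  thus ?thesis unfolding avoiders_def cnt_def by simp
qed

lemma tnth:
  fixes s :: "nat list"
  defines "m \<equiv> length s"
  shows "(1 # map Suc s @ [m + 2]) ! 0 = 1"
    and "a < m \<Longrightarrow> (1 # map Suc s @ [m + 2]) ! (a + 1) = Suc (s ! a)"
    and "(1 # map Suc s @ [m + 2]) ! (m + 1) = m + 2"
  by (auto simp: nth_append m_def)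

lemma contains_T:
  assumes sp: "distinct s" "set s = {1..length s}" and m1: "length s \<ge> 1"
  shows "contains p (one_sigma_k s) \<longleftrightarrow> \<not> PT s p"
proof -
  define m where "m = length s"
  define t where "t = 1 # map Suc s @ [m + 2]"
  have lt: "length t = m + 2" by (simp add: t_def m_def)
  have t0: "t ! 0 = 1" and tm: "\<And>a. a < m \<Longrightarrow> t ! (a+1) = Suc (s ! a)" and tl: "t ! (m+1) = m + 2"
    using tnth[where s=s] unfolding t_def m_def by auto
  have sr: "1 \<le> s ! a \<and> s ! a \<le> m" if "a < m" for a
  proof -
    have "s ! a \<in> set s" using that m_def by simp
    thus ?thesis using sp(2) m_def by auto
  qed
  have m1': "m \<ge> 1" using m1 m_def by simp
  have os: "one_sigma_k s = (t, {0, m})" unfolding one_sigma_k_def t_def m_def by simp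
  show ?thesis
  proof
    assume "contains p (one_sigma_k s)"
    then obtain idx where i1: "\<forall>a<m+2. idx a < length p"
      and i2: "\<forall>a b. a < b \<and> b < m+2 \<longrightarrow> idx a < idx b"
      and i3: "\<forall>j. j + 1 < m+2 \<and> j \<notin> {0, m} \<longrightarrow> idx (j + 1) = idx j + 1"
      and i4: "\<forall>a<m+2. \<forall>b<m+2. (p ! idx a < p ! idx b) = (t ! a < t ! b)"
      using lt unfolding contains_def Let_def os by auto
    define i where "i = idx 1"
    have e: "idx (a + 1) = i + a" if "a < m" for a
      using that
    proof (induction a)
      case (Suc a)
      have "idx (Suc a + 1) = idx (a + 1) + 1" using i3[rule_format, of "a+1"] Suc by auto
      thus ?case using Suc by simp
    qed (simp add: i_def)
    have o: "occ s p i" unfolding occ_def m_def[symmetric]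
    proof
      have "idx m < idx (m+1)" "idx (m+1) < length p" using i1 i2 by auto
      moreover have "idx m = i + (m - 1)" using e[of "m-1"] m1' by simp
      ultimately show "i + m \<le> length p" by linarith
    next
      show "\<forall>a<m. \<forall>b<m. (p ! (i + a) < p ! (i + b)) = (s ! a < s ! b)"
      proof (intro allI impI)
        fix a b assume ab: "a < m" "b < m"
        have "(p ! idx (a+1) < p ! idx (b+1)) = (t ! (a+1) < t ! (b+1))" using i4 ab by auto
        thus "(p ! (i + a) < p ! (i + b)) = (s ! a < s ! b)" using e ab tm by simp
      qed
    qed
    have hi: "idx 0 < i" unfolding i_def using i2 by auto
    have ij: "i + m \<le> idx (m+1)"
    proof -
      have "idx m < idx (m+1)" using i2 by auto
      moreover have "idx m = i + (m - 1)" using e[of "m-1"] m1' by simp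
      ultimately show ?thesis using m1' by linarith
    qed
    have jl: "idx (m+1) < length p" using i1 by auto
    have c1: "p ! idx 0 < p ! (i + a)" if "a < m" for a
    proof -
      have "(p ! idx 0 < p ! idx (a+1)) = (t ! 0 < t ! (a+1))" using i4 that by auto
      thus ?thesis using t0 tm[OF that] sr[OF that] e[OF that] by simp
    qed
    have c2: "p ! (i + a) < p ! idx (m+1)" if "a < m" for a
    proof -
      have "(p ! idx (a+1) < p ! idx (m+1)) = (t ! (a+1) < t ! (m+1))" using i4 that by auto
      thus ?thesis using tl tm[OF that] sr[OF that] e[OF that] by simp
    qed
    show "\<not> PT s p" unfolding PT_def m_def[symmetric] using o hi ij jl c1 c2 by blast
  next
    assume "\<not> PT s p"
    then obtain h i j where o: "occ s p i" and hi: "h < i" and ij: "i + m \<le> j" and jl: "j < length p"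
      and c1: "\<forall>a<m. p!h < p!(i+a)" and c2: "\<forall>a<m. p!(i+a) < p!j"
      unfolding PT_def m_def by blast
    have oc: "\<forall>a<m. \<forall>b<m. (p ! (i + a) < p ! (i + b)) = (s ! a < s ! b)" using o unfolding occ_def m_def by blast
    define idx where "idx x = (if x = 0 then h else if x \<le> m then i + (x - 1) else j)" for x
    have "p!h < p!(i+0)" "p!(i+0) < p!j" using c1 c2 m1' by auto
    hence hj: "p!h < p!j" by simp
    have tv: "t ! x = (if x = 0 then 1 else if x \<le> m then Suc (s ! (x - 1)) else m + 2)" if xl: "x < m + 2" for x
    proof -
      consider "x = 0" | "0 < x \<and> x \<le> m" | "x = m + 1" using xl by (cases "x = 0"; cases "x \<le> m") auto
      thus ?thesis
      proof cases
        case 2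
        then obtain a where "x = a + 1" "a < m" by (metis Suc_eq_plus1 Suc_le_eq Suc_pred)
        thus ?thesis using tm by simp
      qed (use t0 tl in auto)
    qed
    have "contains p (t, {0, m})" unfolding contains_def Let_def fst_conv snd_conv lt
    proof (intro exI[of _ idx] conjI allI impI)
      fix a assume "a < m + 2"
      thus "idx a < length p" unfolding idx_def using hi ij jl by auto
    next
      fix a b assume "a < b \<and> b < m + 2"
      thus "idx a < idx b" unfolding idx_def using hi ij jl m1' by auto
    next
      fix jj assume "jj + 1 < m + 2 \<and> jj \<notin> {0, m}"
      thus "idx (jj + 1) = idx jj + 1" unfolding idx_def by auto
    next
      fix a b assume ab: "a < m + 2" "b < m + 2"
      have ix: "idx 0 = h" "\<And>x. 0 < x \<Longrightarrow> x \<le> m \<Longrightarrow> idx x = i + (x - 1)" "idx (m+1) = j"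
        unfolding idx_def by auto
      have tx: "t ! 0 = 1" "\<And>x. 0 < x \<Longrightarrow> x \<le> m \<Longrightarrow> t ! x = Suc (s ! (x - 1))" "t ! (m+1) = m + 2"
        using tv by auto
      consider "a = 0" | "0 < a \<and> a \<le> m" | "a = m + 1" using ab by (cases "a = 0"; cases "a \<le> m") auto
      note ca = this
      consider "b = 0" | "0 < b \<and> b \<le> m" | "b = m + 1" using ab by (cases "b = 0"; cases "b \<le> m") auto
      note cb = this
      show "(p ! idx a < p ! idx b) = (t ! a < t ! b)"
      proof (cases rule: ca)
        case 1
        show ?thesis
        proof (cases rule: cb)
          case 1 thus ?thesis using \<open>a = 0\<close> by simp
        next
          case 2
          have bm: "b - 1 < m" using 2 by linarith
          have "p ! h < p ! (i + (b - 1))" using c1 bm by blast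
          moreover have "1 < Suc (s ! (b - 1))" using sr[OF bm] by simp
          ultimately show ?thesis using \<open>a = 0\<close> ix tx 2 by simp
        next
          case 3
          show ?thesis using \<open>a = 0\<close> 3 ix tx hj by simp
        qed
      next
        case 2
        have am: "a - 1 < m" using 2 by linarith
        show ?thesis
        proof (cases rule: cb)
          case 1
          have "p ! h < p ! (i + (a - 1))" using c1 am by blast
          moreover have "1 < Suc (s ! (a - 1))" using sr[OF am] by simp
          ultimately show ?thesis using 1 ix tx 2 by simp
        next
          case b2: 2
          have bm: "b - 1 < m" using b2 by linarith
          have "(p ! (i + (a-1)) < p ! (i + (b-1))) = (s ! (a-1) < s ! (b-1))" using oc am bm by blast
          thus ?thesis using ix tx 2 b2 by simp
        next
          case 3
          have "p ! (i + (a - 1)) < p ! j" using c2 am by blast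
          moreover have "Suc (s ! (a - 1)) < m + 2" using sr[OF am] by simp
          ultimately show ?thesis using 3 ix tx 2 by simp
        qed
      next
        case 3
        show ?thesis
        proof (cases rule: cb)
          case 1
          show ?thesis using \<open>b = 0\<close> 3 ix tx hj by simp
        next
          case 2
          have bm: "b - 1 < m" using 2 by linarith
          have "p ! (i + (b - 1)) < p ! j" using c2 bm by blast
          moreover have "Suc (s ! (b - 1)) < m + 2" using sr[OF bm] by simp
          ultimately show ?thesis using 3 ix tx 2 by simp
        next
          case b3: 3 thus ?thesis using 3 by simp
        qed
      qed
    qed
    thus "contains p (one_sigma_k s)" using os by simp
  qed
qed

lemma avoiders_T:
  assumes "distinct s" "set s = {1..length s}" "length s \<ge> 1"
  shows "avoiders n (one_sigma_k s) = cnt (PT s) {1..n}"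
proof -
  have "{p \<in> perms n. \<not> contains p (one_sigma_k s)} = {p. distinct p \<and> set p = {1..n} \<and> PT s p}"
    using contains_T[OF assms] by (auto simp: perms_def)
  thus ?thesis unfolding avoiders_def cnt_def by simp
qed

lemma rec_real:
  fixes X N1 N2 :: "nat \<Rightarrow> nat"
  assumes n: "n \<ge> 1" and r: "X n \<le> (\<Sum>j\<le>n-1. ((n-1) choose j) * N1 j * N2 (n-1-j))"
  shows "real n * (real (X n) / fact n) \<le> (\<Sum>j<n. (real (N1 j) / fact j) * (real (N2 (n-1-j)) / fact (n-1-j)))"
proof -
  have fn: "(fact n :: real) = real n * fact (n-1)" using n by (metis Suc_diff_1 fact_Suc less_one not_le of_nat_Suc le_less_trans zero_less_one)
  have "real n * (real (X n) / fact n) = real (X n) / fact (n-1)" using n fn by simp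
  also have "\<dots> \<le> real (\<Sum>j\<le>n-1. ((n-1) choose j) * N1 j * N2 (n-1-j)) / fact (n-1)"
    using r by (intro divide_right_mono) (simp only: of_nat_le_iff, simp)
  also have "\<dots> = (\<Sum>j\<le>n-1. real ((n-1) choose j) / fact (n-1) * real (N1 j) * real (N2 (n-1-j)))"
    by (simp add: sum_divide_distrib)
  also have "\<dots> = (\<Sum>j\<le>n-1. (real (N1 j) / fact j) * (real (N2 (n-1-j)) / fact (n-1-j)))"
  proof (rule sum.cong[OF refl])
    fix j assume "j \<in> {..n-1}"
    hence j: "j \<le> n - 1" by simp
    have "real ((n-1) choose j) = fact (n-1) / (fact j * fact (n-1-j))" by (rule binomial_fact[OF j])
    thus "real ((n-1) choose j) / fact (n-1) * real (N1 j) * real (N2 (n-1-j)) =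
          (real (N1 j) / fact j) * (real (N2 (n-1-j)) / fact (n-1-j))" by simp
  qed
  also have "{..n-1} = {..<n}" using n by auto
  finally show ?thesis .
qed

lemma card_1n: "card {1..n::nat} = n" by simp

theorem mainTheorem13:
  fixes k :: nat and \<sigma> :: "nat list"
  assumes "k \<ge> 4" and "\<sigma> \<in> perms (k - 2)"
  shows "\<exists>L. (\<lambda>n. root n (real (avoiders n (one_sigma_k \<sigma>)) / fact n)) \<longlonglongrightarrow> L
            \<and> (\<lambda>n. root n (real (avoiders n (\<sigma>, {})) / fact n)) \<longlonglongrightarrow> L"
proof -
  have ds: "distinct \<sigma>" and ss: "set \<sigma> = {1..k-2}" using assms(2) by (auto simp: perms_def)
  have ls: "length \<sigma> = k - 2" using distinct_card[OF ds] ss by simp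
  have ss': "set \<sigma> = {1..length \<sigma>}" using ss ls by simp
  have l1: "length \<sigma> \<ge> 1" using ls assms(1) by simp
  define a where "a n = real (cnt (PA \<sigma>) {1..n}) / fact n" for n
  define u where "u n = real (cnt (PU \<sigma>) {1..n}) / fact n" for n
  define t where "t n = real (cnt (PT \<sigma>) {1..n}) / fact n" for n
  have le1: "real (cnt Q {1..n}) / fact n \<le> 1" for Q n
  proof -
    have "cnt Q {1..n} \<le> fact n" using cnt_le_fact[of "{1..n}" Q] by simp
    hence "real (cnt Q {1..n}) \<le> fact n" by (metis of_nat_fact of_nat_le_iff)
    thus ?thesis by (simp add: divide_le_eq)
  qed
  have a0: "0 \<le> a n" and a1: "a n \<le> 1" for n using le1 by (auto simp: a_def)
  have u0: "0 \<le> u n" and u1: "u n \<le> 1" for n using le1 by (auto simp: u_def)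
  have t0: "0 \<le> t n" and t1: "t n \<le> 1" for n using le1 by (auto simp: t_def)
  have sm: "a (m+n) \<le> a m * a n" for m n
  proof -
    have "real (cnt (PA \<sigma>) {1..m+n}) \<le> real ((m+n) choose m) * real (cnt (PA \<sigma>) {1..m}) * real (cnt (PA \<sigma>) {1..n})"
      using submult_nat[of \<sigma> m n] by (simp only: of_nat_mult[symmetric] of_nat_le_iff)
    hence "real (cnt (PA \<sigma>) {1..m+n}) / fact (m+n) \<le> real ((m+n) choose m) * real (cnt (PA \<sigma>) {1..m}) * real (cnt (PA \<sigma>) {1..n}) / fact (m+n)"
      by (intro divide_right_mono) auto
    also have "\<dots> = a m * a n"
      unfolding a_def binomial_fact[of m "m+n", OF le_add1] by simp
    finally show ?thesis unfolding a_def .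
  qed
  have urec: "real n * u n \<le> (\<Sum>j<n. u j * a (n-1-j))" if n: "n \<ge> 1" for n
  proof -
    have "real n * u n \<le> (\<Sum>j<n. a j * u (n-1-j))"
      using rec_real[where ?X="\<lambda>n. cnt (PU \<sigma>) {1..n}" and ?N1.0="\<lambda>j. cnt (PA \<sigma>) {1..j}" and ?N2.0="\<lambda>j. cnt (PU \<sigma>) {1..j}", OF n U_rec_nat[OF n, of \<sigma>]] unfolding a_def u_def .
    also have "\<dots> = (\<Sum>j<n. a (n - Suc j) * u (n - 1 - (n - Suc j)))"
      by (rule sum.nat_diff_reindex[of "\<lambda>j. a j * u (n-1-j)" n, symmetric])
    also have "\<dots> = (\<Sum>j<n. u j * a (n-1-j))"
      by (rule sum.cong[OF refl]) (auto simp: mult.commute)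
    finally show ?thesis .
  qed
  have trec: "real n * t n \<le> (\<Sum>j<n. t j * u (n-1-j))" if n: "n \<ge> 1" for n
    using rec_real[where ?X="\<lambda>n. cnt (PT \<sigma>) {1..n}" and ?N1.0="\<lambda>j. cnt (PT \<sigma>) {1..j}" and ?N2.0="\<lambda>j. cnt (PU \<sigma>) {1..j}", OF n T_rec_nat[OF n, of \<sigma>]] unfolding t_def u_def .
  have at: "a n \<le> t n" for n
    unfolding a_def t_def using A_le_T[of \<sigma> n] by (simp add: divide_right_mono)
  define L where "L = Inf {root n (a n) |n. n \<ge> 1}"
  have aL: "(\<lambda>n. root n (a n)) \<longlonglongrightarrow> L" and L0: "L \<ge> 0" and low: "\<And>n. n \<ge> 1 \<Longrightarrow> L \<le> root n (a n)"
    using fekete[OF a0 a1 sm] unfolding L_def by blast+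
  have tL: "(\<lambda>n. root n (t n)) \<longlonglongrightarrow> L"
  proof (rule conv_lemma)
    fix n :: nat assume n: "n \<ge> 1"
    have "root n (a n) \<le> root n (t n)" using n at by simp
    thus "L \<le> root n (t n)" using low[OF n] by linarith
  next
    fix d assume d: "d > L"
    define c1 where "c1 = L + (d - L) / 3"
    define c2 where "c2 = L + 2 * (d - L) / 3"
    have c: "0 < c1" "L < c1" "c1 < c2" "c2 < d" using d L0 unfolding c1_def c2_def by (auto simp: field_simps)
    have "\<forall>\<^sub>F n in sequentially. root n (a n) < c1" using order_tendstoD(2)[OF aL c(2)] .
    hence "\<forall>\<^sub>F n in sequentially. a n \<le> c1 ^ n" using a0 by (rule ev_le_pow)
    then obtain K where K: "\<And>n. a n \<le> K * c1 ^ n" using geom_bound[where f=a, OF a0 c(1)] by blast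
    obtain M :: nat where M: "K / c1 \<le> M" using real_arch_simple by blast
    have ub: "u n \<le> real (n+1) ^ M * c1 ^ n" for n
      using rec_bound[where x=u and y=a and n=n, OF u0 u1 c(1) K M urec] by (simp add: add.commute)
    have "\<forall>\<^sub>F n in sequentially. root n (u n) < c2"
      using ev_root_lt[OF c(1) c(3) u0 ub] .
    hence "\<forall>\<^sub>F n in sequentially. u n \<le> c2 ^ n" using u0 by (rule ev_le_pow)
    then obtain K2 where K2: "\<And>n. u n \<le> K2 * c2 ^ n" using geom_bound[where f=u, OF u0] c by fastforce
    obtain M2 :: nat where M2: "K2 / c2 \<le> M2" using real_arch_simple by blast
    have c20: "0 < c2" using c by simp
    have tb: "t n \<le> real (n+1) ^ M2 * c2 ^ n" for n
      using rec_bound[where x=t and y=u and n=n, OF t0 t1 c20 K2 M2 trec] by (simp add: add.commute)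
    show "\<forall>\<^sub>F n in sequentially. root n (t n) < d"
      using ev_root_lt[OF c20 c(4) t0 tb] .
  qed
  have "(\<lambda>n. root n (real (avoiders n (one_sigma_k \<sigma>)) / fact n)) = (\<lambda>n. root n (t n))"
    unfolding t_def avoiders_T[OF ds ss' l1] ..
  moreover have "(\<lambda>n. root n (real (avoiders n (\<sigma>, {})) / fact n)) = (\<lambda>n. root n (a n))"
    unfolding a_def avoiders_A[OF l1] ..
  ultimately show ?thesis using tL aL by auto
qed

end
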